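(* Let $q$ be a prime power and suppose there exists a linear $(2,t_o,s,q)$-AONT with $2\le t_o$. Then \[ s\le \max\{\,1+(t_o-2)(q+1),\; 2+(t_o-1)(q-1)\,\}.\]
   Context: A linear $(t_i,t_o,s,q)$-AONT is given by an invertible $s\times s$ matrix $M$ over $\mathbb{F}_q$ defining the map $\mathbf{x}\mapsto\mathbf{y}=\mathbf{x}M^{-1}$ on row vectors of $\mathbb{F}_q^s$, such that for every set $I$ of $t_i$ input coordinates and every set $J$ of $s-t_o$ output coordinates, the pair $((x_i)_{i\in I},(y_j)_{j\in J})$ takes every value in $\mathbb{F}_q^{t_i+s-t_o}$ equally often as $\mathbf{x}$ ranges over $\mathbb{F}_q^s$. Equivalently, $M$ is invertible and every $t_o\times t_i$ submatrix of $M$ has rank $t_i$. *)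

theory Defs
  imports "Jordan_Normal_Form.DL_Rank" "Jordan_Normal_Form.DL_Submatrix"
begin

text \<open>A linear (t_i, t_o, s, q)-AONT over the finite field 'a (with q = CARD('a)):
  an invertible s x s matrix M such that every t_o x t_i submatrix of M
  (rows I, columns J, |I| = t_o, |J| = t_i) has rank t_i.\<close>

definition linear_AONT :: "nat \<Rightarrow> nat \<Rightarrow> nat \<Rightarrow> 'a::field mat \<Rightarrow> bool" where
  "linear_AONT t_i t_o s M \<longleftrightarrow>
     1 \<le> t_i \<and> t_i \<le> t_o \<and> t_o \<le> s \<and>
     M \<in> carrier_mat s s \<and> invertible_mat M \<and>
     (\<forall>I J. I \<subseteq> {..<s} \<longrightarrow> J \<subseteq> {..<s} \<longrightarrow> card I = t_o \<longrightarrow> card J = t_i \<longrightarrow>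
        vec_space.rank t_o (submatrix M I J) = t_i)"

end

theory Submission
  imports Defs
begin

lemma pick01:
  assumes "j1 < (j2::nat)"
  shows "pick {j1,j2} 0 = j1" "pick {j1,j2} (Suc 0) = j2"
proof -
  show 0: "pick {j1,j2} 0 = j1" unfolding pick.simps using assms by (intro Least_equality) auto
  show "pick {j1,j2} (Suc 0) = j2" unfolding pick.simps(2) 0 using assms by (intro Least_equality) auto
qed

lemma K0:
  fixes M :: "'a::field mat"
  assumes A: "linear_AONT 2 t s M" and j: "j1 < j2" "j2 < s"
    and I: "I \<subseteq> {..<s}" "card I = t" and ab: "a \<noteq> 0 \<or> b \<noteq> 0"
    and z: "\<forall>i\<in>I. a * M $$ (i,j1) + b * M $$ (i,j2) = 0"
  shows False
proof -
  interpret V: vec_space "TYPE('a)" t .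
  from A have Mc: "M \<in> carrier_mat s s" unfolding linear_AONT_def by auto
  define S where "S = submatrix M I {j1,j2}"
  have "\<forall>I J. I \<subseteq> {..<s} \<longrightarrow> J \<subseteq> {..<s} \<longrightarrow> card I = t \<longrightarrow> card J = 2 \<longrightarrow>
        V.rank (submatrix M I J) = 2" using A unfolding linear_AONT_def by blast
  moreover have "{j1,j2} \<subseteq> {..<s}" "card {j1,j2} = 2" using j by auto
  ultimately have r: "V.rank S = 2" using I unfolding S_def by blast
  have e1: "{i. i < dim_row M \<and> i \<in> I} = I" using I Mc by auto
  have e2: "{i. i < dim_col M \<and> i \<in> {j1,j2}} = {j1,j2}" using j Mc by auto
  have d1: "dim_row S = t" unfolding S_def dim_submatrix e1 using I by simp
  have c2: "card {j1,j2} = 2" using j by simp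
  have d2: "dim_col S = 2" unfolding S_def dim_submatrix e2 by (rule c2)
  have Sc: "S \<in> carrier_mat t 2" using d1 d2 by (intro carrier_matI)
  define v where "v = vec 2 (\<lambda>k. if k = 0 then a else b)"
  have vc: "v \<in> carrier_vec 2" unfolding v_def by simp
  have vnz: "v \<noteq> 0\<^sub>v 2"
  proof
    assume "v = 0\<^sub>v 2"
    then have "v $ 0 = 0" "v $ 1 = 0" by auto
    then show False using ab unfolding v_def by auto
  qed
  have fin: "finite I" using I by (meson finite_lessThan finite_subset)
  have Sv: "S *\<^sub>v v = 0\<^sub>v t"
  proof (rule eq_vecI)
    show "dim_vec (S *\<^sub>v v) = dim_vec (0\<^sub>v t)" using Sc by auto
    fix r assume "r < dim_vec (0\<^sub>v t)"
    then have rt: "r < t" by simp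
    have pI: "pick I r \<in> I" using pick_in_set[of r I] rt I by auto
    have "(S *\<^sub>v v) $ r = (\<Sum>k\<in>{0..<2}. row S r $ k * v $ k)"
      using d1 rt by (simp add: index_mult_mat_vec scalar_prod_def v_def)
    also have "\<dots> = row S r $ 0 * a + row S r $ 1 * b" by (simp add: v_def numeral_2_eq_2)
    also have "\<dots> = S $$ (r,0) * a + S $$ (r,1) * b" using d1 d2 rt by simp
    also have "\<dots> = M $$ (pick I r, j1) * a + M $$ (pick I r, j2) * b"
      unfolding S_def using submatrix_index[of r M I 0 "{j1,j2}"] submatrix_index[of r M I 1 "{j1,j2}"]
        e1 e2 rt I j pick01[OF j(1)] by (auto simp: card_insert_if)
    also have "\<dots> = 0" using z pI by (simp add: mult.commute)
    finally show "(S *\<^sub>v v) $ r = 0\<^sub>v t $ r" using rt by simp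
  qed
  show False
  proof (cases "distinct (cols S)")
    case True
    have "V.lin_dep (set (cols S))" using V.lin_depI[OF Sc vc vnz Sv True] .
    moreover have "V.lin_indpt (set (cols S))" using V.full_rank_lin_indpt[OF Sc r True] .
    ultimately show False by simp
  next
    case False
    have lc: "length (cols S) = 2" using Sc by simp
    have "card (set (cols S)) < 2"
      using False lc card_distinct[of "cols S"] card_length[of "cols S"] by linarith
    obtain T where "maximal T (\<lambda>T. T \<subseteq> set (cols S) \<and> V.lin_indpt T)"
      using maximal_exists[of "(\<lambda>T. T \<subseteq> set (cols S) \<and> V.lin_indpt T)" "card (set (cols S))" "{}"]
      by (meson List.finite_set card_mono empty_iff empty_subsetI V.finite_lin_indpt2 rev_finite_subset)
    moreover then have "card T \<le> card (set (cols S))" by (simp add: card_mono maximal_def)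
    ultimately have "V.rank S = card T" "card T < 2" using V.rank_card_indpt[OF Sc] \<open>card (set (cols S)) < 2\<close> by auto
    then show False using r by simp
  qed
qed

lemma K:
  fixes M :: "'a::field mat"
  assumes A: "linear_AONT 2 t s M" and j: "j1 < s" "j2 < s" "j1 \<noteq> j2"
    and R: "R \<subseteq> {..<s}" and ab: "a \<noteq> 0 \<or> b \<noteq> 0"
    and z: "\<forall>i\<in>R. a * M $$ (i,j1) + b * M $$ (i,j2) = 0"
  shows "card R \<le> t - 1"
proof (rule ccontr)
  assume "\<not> card R \<le> t - 1"
  then have "t \<le> card R" by simp
  then obtain I where I: "I \<subseteq> R" "card I = t" using obtain_subset_with_card_n by metis
  have IS: "I \<subseteq> {..<s}" using I R by auto
  show False
  proof (cases "j1 < j2")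
    case True
    show False using K0[OF A True j(2) IS I(2) ab] z I by auto
  next
    case False
    then have "j2 < j1" using j by simp
    moreover have "b \<noteq> 0 \<or> a \<noteq> 0" using ab by auto
    moreover have "\<forall>i\<in>I. b * M $$ (i,j2) + a * M $$ (i,j1) = 0" using z I by (auto simp: add.commute)
    ultimately show False using K0[OF A _ j(1) IS I(2)] by blast
  qed
qed

theorem mainTheorem17:
  fixes M :: "'a::{finite,field} mat" and q s t_o :: nat
  assumes "card (UNIV :: 'a set) = q"
    and "linear_AONT 2 t_o s M"
    and "2 \<le> t_o"
  shows "s \<le> max (1 + (t_o - 2) * (q + 1)) (2 + (t_o - 1) * (q - 1))"
proof -
  note A = assms(2)
  have ts: "t_o \<le> s" using A unfolding linear_AONT_def by auto
  define L where "L j1 j2 c = {i. i < s \<and> c * M $$ (i,j1) + (-1) * M $$ (i,j2) = 0}" for j1 j2 and c :: 'a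
  define Z where "Z j = {i. i < s \<and> M $$ (i,j) = 0}" for j
  have Lb: "card (L j1 j2 c) \<le> t_o - 1" if "j1 < s" "j2 < s" "j1 \<noteq> j2" for j1 j2 c
    using K[OF A that, of "L j1 j2 c" c "-1"] unfolding L_def by auto
  have Zb: "card (Z j1) \<le> t_o - 1" if "j1 < s" "j2 < s" "j1 \<noteq> j2" for j1 j2
    using K[OF A that, of "Z j1" 1 0] unfolding Z_def by auto
  have cover: "{..<s} \<subseteq> Z j1 \<union> (\<Union>c\<in>UNIV - {0}. L j1 j2 c) \<union> Z j2" for j1 j2
  proof
    fix i assume i: "i \<in> {..<s}"
    show "i \<in> Z j1 \<union> (\<Union>c\<in>UNIV - {0}. L j1 j2 c) \<union> Z j2"
    proof (cases "M $$ (i,j1) = 0 \<or> M $$ (i,j2) = 0")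
      case True then show ?thesis using i unfolding Z_def by auto
    next
      case False
      then have "M $$ (i,j2) / M $$ (i,j1) \<in> UNIV - {0}" "i \<in> L j1 j2 (M $$ (i,j2) / M $$ (i,j1))"
        using i unfolding L_def by auto
      then show ?thesis by blast
    qed
  qed
  have finL: "finite (L j1 j2 c)" "finite (Z j)" for j1 j2 c j unfolding L_def Z_def by auto
  show ?thesis
  proof (cases "\<exists>j1 j2 i. j1 < s \<and> j2 < s \<and> j1 \<noteq> j2 \<and> i < s \<and> M $$ (i,j1) = 0 \<and> M $$ (i,j2) = 0")
    case True
    then obtain j1 j2 i0 where j: "j1 < s" "j2 < s" "j1 \<noteq> j2" and i0: "i0 < s" "M $$ (i0,j1) = 0" "M $$ (i0,j2) = 0"
      by blast
    have "{..<s} - {i0} \<subseteq> (Z j1 - {i0}) \<union> (\<Union>c. L j1 j2 c - {i0})"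
      using cover[of j1 j2] unfolding L_def Z_def by auto
    then have "card ({..<s} - {i0}) \<le> card ((Z j1 - {i0}) \<union> (\<Union>c. L j1 j2 c - {i0}))"
      by (intro card_mono) (auto simp: finL)
    also have "\<dots> \<le> card (Z j1 - {i0}) + card (\<Union>c. L j1 j2 c - {i0})" by (rule card_Un_le)
    also have "card (\<Union>c. L j1 j2 c - {i0}) \<le> (\<Sum>c\<in>UNIV. card (L j1 j2 c - {i0}))" by (rule card_UN_le) simp
    also have "\<dots> \<le> (\<Sum>c\<in>(UNIV::'a set). t_o - 2)"
    proof (rule sum_mono)
      fix c
      have "i0 \<in> L j1 j2 c" using i0 unfolding L_def by auto
      then show "card (L j1 j2 c - {i0}) \<le> t_o - 2" using Lb[OF j, of c] finL by (simp add: card_Diff_singleton)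
    qed
    also have "\<dots> = q * (t_o - 2)" using assms(1) by simp
    finally have "card ({..<s} - {i0}) \<le> card (Z j1 - {i0}) + q * (t_o - 2)" by simp
    moreover have "i0 \<in> Z j1" using i0 unfolding Z_def by auto
    ultimately have "s - 1 \<le> (t_o - 2) + q * (t_o - 2)" using Zb[OF j] finL i0 by (simp add: card_Diff_singleton)
    then have "s \<le> 1 + (t_o - 2) * (q + 1)" using ts assms(3) by (simp add: algebra_simps)
    then show ?thesis by simp
  next
    case False
    have disj: "Z j1 \<inter> Z j2 = {}" if "j1 < s" "j2 < s" "j1 \<noteq> j2" for j1 j2
      using False that unfolding Z_def by blast
    have pair: "s \<le> 2 + (t_o - 1) * (q - 1)" if j: "j1 < s" "j2 < s" "j1 \<noteq> j2"
      and c: "card (Z j1) \<le> 1" "card (Z j2) \<le> 1" for j1 j2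
    proof -
      have "s = card {..<s}" by simp
      also have "\<dots> \<le> card (Z j1 \<union> (\<Union>c\<in>UNIV - {0}. L j1 j2 c) \<union> Z j2)"
        by (intro card_mono cover) (auto simp: finL)
      also have "\<dots> \<le> card (Z j1 \<union> (\<Union>c\<in>UNIV - {0}. L j1 j2 c)) + card (Z j2)" by (rule card_Un_le)
      also have "\<dots> \<le> card (Z j1) + card (\<Union>c\<in>UNIV - {0}. L j1 j2 c) + card (Z j2)"
        using card_Un_le by simp
      also have "card (\<Union>c\<in>UNIV - {0}. L j1 j2 c) \<le> (\<Sum>c\<in>UNIV - {0}. card (L j1 j2 c))"
        by (rule card_UN_le) simp
      also have "\<dots> \<le> (\<Sum>c\<in>(UNIV - {0::'a}). t_o - 1)" by (rule sum_mono) (rule Lb[OF j])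
      also have "\<dots> = (q - 1) * (t_o - 1)" using assms(1) by (simp add: card_Diff_singleton)
      finally show ?thesis using c by (simp add: algebra_simps)
    qed
    define G where "G = {j. j < s \<and> card (Z j) \<le> 1}"
    show ?thesis
    proof (cases "2 \<le> card G")
      case True
      then obtain G2 where "G2 \<subseteq> G" "card G2 = 2" using obtain_subset_with_card_n by metis
      then obtain j1 j2 where "j1 \<in> G" "j2 \<in> G" "j1 \<noteq> j2" by (auto simp: card_2_iff)
      then have "s \<le> 2 + (t_o - 1) * (q - 1)" using pair unfolding G_def by auto
      then show ?thesis by simp
    next
      case False
      have GS: "G \<subseteq> {..<s}" unfolding G_def by auto
      have "(\<Sum>j<s. card (Z j)) = card (\<Union>j<s. Z j)"
        by (rule card_UN_disjoint[symmetric]) (auto simp: finL disj)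
      also have "\<dots> \<le> card {..<s}" by (intro card_mono) (auto simp: Z_def)
      finally have s1: "(\<Sum>j<s. card (Z j)) \<le> s" by simp
      have "(\<Sum>j\<in>{..<s} - G. 2) \<le> (\<Sum>j\<in>{..<s} - G. card (Z j))"
        by (rule sum_mono) (auto simp: G_def)
      also have "\<dots> \<le> (\<Sum>j<s. card (Z j))" by (rule sum_mono2) auto
      finally have "2 * (s - card G) \<le> s" using s1 GS by (simp add: card_Diff_subset finite_subset)
      then have "s \<le> 2" using False by linarith
      then show ?thesis by simp
    qed
  qed
qed

end
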